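(* Let $X$ be a chain connected uniform space. The following are equivalent: (a) $X$ is uniformly joinable; (b) $\pi_X\colon GP(X,x_0)\to X$ generates the uniform structure of $X$ for each $x_0\in X$; (c) $\pi_X\colon GP(X,x_0)\to X$ generates the uniform structure of $X$ for some $x_0\in X$.
   Context: Entourages are symmetric and contain the diagonal; $f(E)=\{(f(x),f(y)):(x,y)\in E\}$; a surjection generates the uniform structure of its range if the sets $f(E)$ form a base of it. $R(X,E)$ is the Rips complex (vertex set $X$, simplices the finite $F$ with $F\times F\subset E$, weak topology); $e(x,y)$ is the edge-path from $x$ to $y$ for $(x,y)\in E$. An $E$-chain is a sequence $x_0,\dots,x_n$ with $(x_i,x_{i+1})\in E$; $X$ is chain connected if for every entourage $E$ any two points are joined by an $E$-chain. Two paths $c,d$ in $R(X,E)$ with initial points $x_c,x_d\in X$ and terminal points $y_c,y_d\in X$ are $E$-homotopic if $(x_c,x_d),(y_c,y_d)\in E$ and $c$ is homotopic rel. end-points in $R(X,E)$ to $e(x_c,x_d)\ast d\ast e(y_d,y_c)$. A generalized path from $x$ to $y$ is a family $c=\{[c_E]\}_E$ indexed by all entourages, $[c_E]$ a homotopy class rel. end-points of paths from $x$ to $y$ in $R(X,E)$, such that $c_F$ is homotopic rel. end-points to $c_E$ in $R(X,E)$ whenever $F\subset E$. Inverse and concatenation are termwise. $GP(X)$ is the set of generalized paths with the uniform structure whose base consists of the sets $F^\ast$ of pairs $(c,d)$ with $c_F$ $F$-homotopic to $d_F$; $GP(X,x_0)\subset GP(X)$ consists of those starting at $x_0$; $\pi_X$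 sends a generalized path to its end-point. A generalized path $c$ from $x$ to $y$ is $F$-short if $(x,y)\in F$ and $c_F$ is homotopic rel. end-points in $R(X,F)$ to $e(x,y)$. $X$ is uniformly joinable if for each entourage $E$ there is an entourage $F$ such that any $(x,y)\in F$ are joined by an $E$-short generalized path. *)

theory Defs
  imports "HOL-Analysis.Analysis"
begin

text \<open>The uniform space X is the whole type 'a of class uniform_space.
  Entourages are symmetric members of the uniformity (they contain the diagonal
  automatically).\<close>

definition entourage :: "('a::uniform_space \<times> 'a) set \<Rightarrow> bool" where
  "entourage E \<longleftrightarrow> eventually (\<lambda>p. p \<in> E) uniformity \<and> sym E \<and> Id \<subseteq> E"

text \<open>E-chains x0,...,xn with consecutive pairs in E are exactly E^*.\<close>
definition chain_connected :: "'a::uniform_space itself \<Rightarrow> bool" where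
  "chain_connected _ \<longleftrightarrow>
     (\<forall>E::('a \<times> 'a) set. entourage E \<longrightarrow> (\<forall>x y. (x, y) \<in> E\<^sup>*))"

text \<open>Points of the geometric realisation are barycentric coordinate functions
  'a \<Rightarrow> real; a vertex x is the function that is 1 at x and 0 elsewhere.\<close>

definition vtx :: "'a \<Rightarrow> ('a \<Rightarrow> real)" where
  "vtx x = (\<lambda>v. if v = x then 1 else 0)"

definition rips_simplex :: "('a \<times> 'a) set \<Rightarrow> 'a set \<Rightarrow> bool" where
  "rips_simplex E \<sigma> \<longleftrightarrow> finite \<sigma> \<and> \<sigma> \<noteq> {} \<and> \<sigma> \<times> \<sigma> \<subseteq> E"

text \<open>Closed geometric simplex spanned by sigma (Euclidean topology = subspace of the
  product topology, since all coordinates outside the finite set sigma vanish).\<close>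
definition geom_simplex :: "'a set \<Rightarrow> ('a \<Rightarrow> real) set" where
  "geom_simplex \<sigma> = {f. (\<forall>v. 0 \<le> f v) \<and> (\<forall>v. v \<notin> \<sigma> \<longrightarrow> f v = 0) \<and> sum f \<sigma> = 1}"

definition rips_carrier :: "('a \<times> 'a) set \<Rightarrow> ('a \<Rightarrow> real) set" where
  "rips_carrier E = \<Union> {geom_simplex \<sigma> | \<sigma>. rips_simplex E \<sigma>}"

definition rips_open :: "('a \<times> 'a) set \<Rightarrow> ('a \<Rightarrow> real) set \<Rightarrow> bool" where
  "rips_open E U \<longleftrightarrow> U \<subseteq> rips_carrier E \<and>
     (\<forall>\<sigma>. rips_simplex E \<sigma> \<longrightarrow> openin (top_of_set (geom_simplex \<sigma>)) (U \<inter> geom_simplex \<sigma>))"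

lemma istopology_rips_open: "istopology (rips_open E)"
  unfolding istopology_def
proof (intro conjI allI impI)
  fix S T assume "rips_open E S" "rips_open E T"
  then show "rips_open E (S \<inter> T)"
  proof -
    have "\<And>\<sigma>. S \<inter> T \<inter> geom_simplex \<sigma> = (S \<inter> geom_simplex \<sigma>) \<inter> (T \<inter> geom_simplex \<sigma>)" by blast
    with \<open>rips_open E S\<close> \<open>rips_open E T\<close> show ?thesis
      unfolding rips_open_def by auto
  qed
next
  fix K assume K: "\<forall>U\<in>K. rips_open E U"
  show "rips_open E (\<Union>K)"
    unfolding rips_open_def
  proof (intro conjI allI impI)
    show "\<Union>K \<subseteq> rips_carrier E" using K by (auto simp: rips_open_def)
  next
    fix \<sigma> assume "rips_simplex E \<sigma>"
    then have "\<And>U. U \<in> K \<Longrightarrow> openin (top_of_set (geom_simplex \<sigma>)) (U \<inter> geom_simplex \<sigma>)"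
      using K by (auto simp: rips_open_def)
    then have "openin (top_of_set (geom_simplex \<sigma>)) (\<Union>((\<lambda>U. U \<inter> geom_simplex \<sigma>) ` K))"
      by blast
    moreover have "\<Union>((\<lambda>U. U \<inter> geom_simplex \<sigma>) ` K) = \<Union>K \<inter> geom_simplex \<sigma>" by blast
    ultimately show "openin (top_of_set (geom_simplex \<sigma>)) (\<Union>K \<inter> geom_simplex \<sigma>)" by simp
  qed
qed

definition rips :: "('a \<times> 'a) set \<Rightarrow> ('a \<Rightarrow> real) topology" where
  "rips E = topology (rips_open E)"

lemma openin_rips: "openin (rips E) U \<longleftrightarrow> rips_open E U"
  unfolding rips_def by (simp add: topology_inverse'[OF istopology_rips_open])

definition rips_homotopic :: "('a \<times> 'a) set \<Rightarrow> (real \<Rightarrow> 'a \<Rightarrow> real) \<Rightarrow> (real \<Rightarrow> 'a \<Rightarrow> real) \<Rightarrow> bool" where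
  "rips_homotopic E p q \<longleftrightarrow>
     homotopic_with (\<lambda>r. r 0 = p 0 \<and> r 1 = p 1) (top_of_set {0..1}) (rips E) p q"

definition edge_path :: "'a \<Rightarrow> 'a \<Rightarrow> real \<Rightarrow> 'a \<Rightarrow> real" where
  "edge_path x y = (\<lambda>t v. (1 - t) * vtx x v + t * vtx y v)"

definition E_homotopic :: "('a \<times> 'a) set \<Rightarrow> (real \<Rightarrow> 'a \<Rightarrow> real) \<Rightarrow> (real \<Rightarrow> 'a \<Rightarrow> real) \<Rightarrow> bool" where
  "E_homotopic E c d \<longleftrightarrow>
     (\<exists>xc xd yc yd. c 0 = vtx xc \<and> d 0 = vtx xd \<and> c 1 = vtx yc \<and> d 1 = vtx yd \<and>
        (xc, xd) \<in> E \<and> (yc, yd) \<in> E \<and>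
        rips_homotopic E c (edge_path xc xd +++ (d +++ edge_path yd yc)))"

text \<open>A generalized path assigns to every entourage E a homotopy class (a set of paths)
  rel. end-points in R(X,E); it is empty at non-entourages.\<close>
type_synonym 'a gpath = "('a \<times> 'a) set \<Rightarrow> (real \<Rightarrow> 'a \<Rightarrow> real) set"

definition is_gpath :: "'a::uniform_space gpath \<Rightarrow> 'a \<Rightarrow> 'a \<Rightarrow> bool" where
  "is_gpath c x y \<longleftrightarrow>
     (\<forall>E. entourage E \<longrightarrow>
        (\<exists>p. pathin (rips E) p \<and> p 0 = vtx x \<and> p 1 = vtx y \<and> c E = {q. rips_homotopic E p q})) \<and>
     (\<forall>E. \<not> entourage E \<longrightarrow> c E = {}) \<and>
     (\<forall>E F. entourage E \<and> entourage F \<and> F \<subseteq> E \<longrightarrow>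
        (\<forall>p \<in> c F. \<forall>q \<in> c E. rips_homotopic E p q))"

definition GP :: "'a::uniform_space gpath set" where
  "GP = {c. \<exists>x y. is_gpath c x y}"

definition GP_at :: "'a::uniform_space \<Rightarrow> 'a gpath set" where
  "GP_at x0 = {c. \<exists>y. is_gpath c x0 y}"

definition gp_end :: "'a::uniform_space gpath \<Rightarrow> 'a" where
  "gp_end c = (THE y. \<exists>x. is_gpath c x y)"

definition GP_star :: "('a::uniform_space \<times> 'a) set \<Rightarrow> ('a gpath \<times> 'a gpath) set" where
  "GP_star F = {(c, d). c \<in> GP \<and> d \<in> GP \<and> (\<exists>p \<in> c F. \<exists>q \<in> d F. E_homotopic F p q)}"

definition is_short :: "('a::uniform_space \<times> 'a) set \<Rightarrow> 'a gpath \<Rightarrow> 'a \<Rightarrow> 'a \<Rightarrow> bool" where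
  "is_short F c x y \<longleftrightarrow> is_gpath c x y \<and> (x, y) \<in> F \<and>
     (\<exists>p \<in> c F. rips_homotopic F p (edge_path x y))"

definition uniformly_joinable :: "'a::uniform_space itself \<Rightarrow> bool" where
  "uniformly_joinable _ \<longleftrightarrow>
     (\<forall>E::('a \<times> 'a) set. entourage E \<longrightarrow>
        (\<exists>F. entourage F \<and> (\<forall>x y. (x, y) \<in> F \<longrightarrow> (\<exists>c. is_short E c x y))))"

definition pi_image :: "'a::uniform_space \<Rightarrow> ('a \<times> 'a) set \<Rightarrow> ('a \<times> 'a) set" where
  "pi_image x0 F = {(gp_end c, gp_end d) | c d. c \<in> GP_at x0 \<and> d \<in> GP_at x0 \<and> (c, d) \<in> GP_star F}"

definition pi_generates :: "'a::uniform_space \<Rightarrow> bool" where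
  "pi_generates x0 \<longleftrightarrow>
     gp_end ` GP_at x0 = UNIV \<and>
     (\<forall>F. entourage F \<longrightarrow> eventually (\<lambda>p. p \<in> pi_image x0 F) uniformity) \<and>
     (\<forall>E. entourage E \<longrightarrow> (\<exists>F. entourage F \<and> pi_image x0 F \<subseteq> E))"

end

theory Submission
  imports Defs
begin


definition phom :: "'b topology \<Rightarrow> (real \<Rightarrow> 'b) \<Rightarrow> (real \<Rightarrow> 'b) \<Rightarrow> bool" where
  "phom T p q \<longleftrightarrow> homotopic_with (\<lambda>r. r 0 = p 0 \<and> r 1 = p 1) (top_of_set {0..1}) T p q"

lemma phom_imp: "phom T p q \<Longrightarrow> pathin T p \<and> pathin T q \<and> q 0 = p 0 \<and> q 1 = p 1"
proof -
  assume h: "phom T p q"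
  have "continuous_map (top_of_set {0..1}) T p \<and> continuous_map (top_of_set {0..1}) T q"
    using h unfolding phom_def by (rule homotopic_with_imp_continuous_maps)
  moreover have "q 0 = p 0 \<and> q 1 = p 1"
    using homotopic_with_imp_property[OF h[unfolded phom_def]] by simp
  ultimately show ?thesis unfolding pathin_def by simp
qed

lemma phom_refl: "pathin T p \<Longrightarrow> phom T p p"
  unfolding phom_def pathin_def by simp

lemma phom_sym: assumes "phom T p q" shows "phom T q p"
proof -
  have e: "q 0 = p 0" "q 1 = p 1" using phom_imp[OF assms] by auto
  show ?thesis using assms unfolding phom_def e
    by (simp add: homotopic_with_sym)
qed

lemma phom_trans: assumes "phom T p q" "phom T q r" shows "phom T p r"
proof -
  have e: "q 0 = p 0" "q 1 = p 1" using phom_imp[OF assms(1)] by auto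
  show ?thesis using assms unfolding phom_def e
    using homotopic_with_trans by blast
qed

lemma phom_map: assumes "phom T p q" "continuous_map T T' f" shows "phom T' (f \<circ> p) (f \<circ> q)"
  using assms unfolding phom_def
  by (rule homotopic_with_compose_continuous_map_left) auto

lemma cvx01: "(a::real) \<in> {0..1} \<Longrightarrow> b \<in> {0..1} \<Longrightarrow> s \<in> {0..1} \<Longrightarrow> (1-s)*a + s*b \<in> {0..1}"
proof -
  assume h: "a \<in> {0..1}" "b \<in> {0..1}" "s \<in> {0..1}"
  have "(1-s)*a \<le> (1-s)" using h by (simp add: mult_left_le)
  moreover have "s*b \<le> s" using h by (simp add: mult_left_le)
  ultimately show ?thesis using h by auto
qed

lemma phom_reparam:
  assumes p: "pathin T p" and cf: "continuous_on {0..1} f" and cg: "continuous_on {0..1} g"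
    and fr: "f ` {0..1} \<subseteq> {0..1}" and gr: "g ` {0..1} \<subseteq> {0..1}"
    and e0: "f 0 = g 0" and e1: "f 1 = g 1"
  shows "phom T (p \<circ> f) (p \<circ> g)"
proof -
  define k where "k = (\<lambda>z::real\<times>real. (1 - fst z) * f (snd z) + fst z * g (snd z))"
  have ck: "continuous_on ({0..1}\<times>{0..1}) k"
    unfolding k_def
    by (intro continuous_intros continuous_on_compose2[OF cf] continuous_on_compose2[OF cg]) auto
  have kr: "k ` ({0..1}\<times>{0..1}) \<subseteq> {0..1}"
    using fr gr by (auto simp: k_def intro!: cvx01)
  have "continuous_map (prod_topology (top_of_set {0..1}) (top_of_set {0..1})) (top_of_set {0..1}) k"
    using ck kr by (simp add: continuous_map_in_subtopology image_subset_iff_funcset)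
  then have c: "continuous_map (prod_topology (top_of_set {0..1}) (top_of_set {0..1})) T (p \<circ> k)"
    using p unfolding pathin_def by (rule continuous_map_compose)
  show ?thesis
    unfolding phom_def homotopic_with_def
    apply (rule exI[of _ "p \<circ> k"])
    using c e0 e1 by (auto simp: k_def algebra_simps)
qed



lemma cm_top: "continuous_on S m \<Longrightarrow> m ` S \<subseteq> A \<Longrightarrow> continuous_map (top_of_set S) (top_of_set A) m"
  by (simp add: continuous_map_in_subtopology image_subset_iff_funcset)

lemma phom_join:
  assumes ha: "phom T a a'" and hb: "phom T b b'" and e: "a 1 = b 0"
  shows "phom T (a +++ b) (a' +++ b')"
proof -
  let ?S = "{0..1::real}\<times>{0..1::real}"
  obtain h1 where h1c: "continuous_map (top_of_set ?S) T h1"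
    and h10: "\<forall>x. h1 (0,x) = a x" and h11: "\<forall>x. h1 (1,x) = a' x"
    and h1p: "\<forall>t\<in>{0..1}. h1 (t,0) = a 0 \<and> h1 (t,1) = a 1"
    using ha unfolding phom_def homotopic_with_def by auto
  obtain h2 where h2c: "continuous_map (top_of_set ?S) T h2"
    and h20: "\<forall>x. h2 (0,x) = b x" and h21: "\<forall>x. h2 (1,x) = b' x"
    and h2p: "\<forall>t\<in>{0..1}. h2 (t,0) = b 0 \<and> h2 (t,1) = b 1"
    using hb unfolding phom_def homotopic_with_def by auto
  define k where "k = (\<lambda>z::real\<times>real. if snd z \<le> 1/2 then h1 (fst z, 2 * snd z) else h2 (fst z, 2 * snd z - 1))"
  have ck: "continuous_map (top_of_set ?S) T k"
    unfolding k_def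
  proof (rule continuous_map_cases_le)
    show "continuous_map (top_of_set ?S) euclideanreal snd"
      by (simp add: continuous_on_snd)
    show "continuous_map (top_of_set ?S) euclideanreal (\<lambda>x. 1/2)" by simp
    have s1: "subtopology (top_of_set ?S) {x \<in> topspace (top_of_set ?S). snd x \<le> 1/2} = top_of_set (?S \<inter> {x. snd x \<le> 1/2})"
    proof -
      have "?S \<inter> {x \<in> ?S. snd x \<le> 1/2} = ?S \<inter> {x. snd x \<le> 1/2}" by auto
      then show ?thesis by (simp only: subtopology_subtopology topspace_euclidean_subtopology)
    qed
    have m1: "continuous_map (top_of_set (?S \<inter> {x. snd x \<le> 1/2})) (top_of_set ?S) (\<lambda>z. (fst z, 2 * snd z))"
      by (rule cm_top) (auto intro!: continuous_intros)
    show "continuous_map (subtopology (top_of_set ?S) {x \<in> topspace (top_of_set ?S). snd x \<le> 1/2}) T (\<lambda>z. h1 (fst z, 2 * snd z))"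
      unfolding s1 using continuous_map_compose[OF m1 h1c] by (simp add: o_def)
    have s2: "subtopology (top_of_set ?S) {x \<in> topspace (top_of_set ?S). 1/2 \<le> snd x} = top_of_set (?S \<inter> {x. 1/2 \<le> snd x})"
    proof -
      have "?S \<inter> {x \<in> ?S. 1/2 \<le> snd x} = ?S \<inter> {x. 1/2 \<le> snd x}" by auto
      then show ?thesis by (simp only: subtopology_subtopology topspace_euclidean_subtopology)
    qed
    have m2: "continuous_map (top_of_set (?S \<inter> {x. 1/2 \<le> snd x})) (top_of_set ?S) (\<lambda>z. (fst z, 2 * snd z - 1))"
      by (rule cm_top) (auto intro!: continuous_intros)
    show "continuous_map (subtopology (top_of_set ?S) {x \<in> topspace (top_of_set ?S). 1/2 \<le> snd x}) T (\<lambda>z. h2 (fst z, 2 * snd z - 1))"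
      unfolding s2 using continuous_map_compose[OF m2 h2c] by (simp add: o_def)
    show "h1 (fst x, 2 * snd x) = h2 (fst x, 2 * snd x - 1)" if "x \<in> topspace (top_of_set ?S)" "snd x = 1/2" for x
    proof -
      have q: "2 * snd x = 1" "2 * snd x - 1 = 0" using that(2) by auto
      have "fst x \<in> {0..1}" using that(1) by (auto simp: mem_Times_iff)
      then show ?thesis unfolding q using h1p h2p e by auto
    qed
  qed
  have a0: "(a +++ b) 0 = a 0" and a1: "(a +++ b) 1 = b 1" by (simp_all add: joinpaths_def)
  show ?thesis
    unfolding phom_def homotopic_with_def a0 a1
  proof (intro exI[of _ k] conjI allI ballI)
    show "continuous_map (prod_topology (top_of_set {0..1}) (top_of_set {0..1})) T k" using ck by simp
    fix x show "k (0, x) = (a +++ b) x" by (simp add: k_def joinpaths_def h10 h20)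
  next
    fix x show "k (1, x) = (a' +++ b') x" by (simp add: k_def joinpaths_def h11 h21)
  next
    fix t :: real assume "t \<in> {0..1}"
    then show "k (t, 0) = a 0" "k (t, 1) = b 1" using h1p h2p by (simp_all add: k_def)
  qed
qed

lemma phom_rev:
  assumes "phom T a a'"
  shows "phom T (reversepath a) (reversepath a')"
proof -
  have c: "continuous_map (top_of_set {0..1::real}) (top_of_set {0..1}) (\<lambda>t. 1 - t)"
    by (rule cm_top) (auto intro!: continuous_intros)
  have "homotopic_with (\<lambda>r. r 0 = reversepath a 0 \<and> r 1 = reversepath a 1) (top_of_set {0..1}) T (a \<circ> (\<lambda>t. 1 - t)) (a' \<circ> (\<lambda>t. 1 - t))"
    using assms unfolding phom_def
    by (rule homotopic_with_compose_continuous_map_right[OF _ c]) (auto simp: reversepath_def)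
  then show ?thesis unfolding phom_def reversepath_def o_def .
qed


lemma pathin_join: "pathin T a \<Longrightarrow> pathin T b \<Longrightarrow> a 1 = b 0 \<Longrightarrow> pathin T (a +++ b)"
  using phom_join[OF phom_refl phom_refl] phom_imp by blast

lemma pathin_rev: "pathin T a \<Longrightarrow> pathin T (reversepath a)"
  using phom_rev[OF phom_refl] phom_imp by blast

lemma phom_reparam_id:
  assumes p: "pathin T p" and cf: "continuous_on {0..1} f" 
    and fr: "f ` {0..1} \<subseteq> {0..1}" and e0: "f 0 = 0" and e1: "f 1 = 1"
  shows "phom T (p \<circ> f) p"
proof -
  have "p \<circ> (\<lambda>x. x) = p" by (simp add: fun_eq_iff)
  then show ?thesis using phom_reparam[OF p cf continuous_on_id fr] e0 e1 by simp
qed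

lemma eq_half: "x * 2 = (1::real) \<Longrightarrow> x = 1/2" by simp

lemma phom_lunit: assumes "pathin T p" shows "phom T ((\<lambda>t. p 0) +++ p) p"
proof -
  have "(\<lambda>t. p 0) +++ p = p \<circ> (\<lambda>t. max 0 (2*t - 1))"
    unfolding fun_eq_iff proof fix x show "((\<lambda>t. p 0) +++ p) x = (p \<circ> (\<lambda>t. max 0 (2*t - 1))) x"
      proof (cases rule: linorder_cases[of x "1/2"])
        case equal then have "2*x - 1 = 0" "2*x = 1" by simp_all
        then show ?thesis by (simp add: joinpaths_def max_def)
      qed (simp_all add: joinpaths_def max_def) qed
  moreover have "phom T (p \<circ> (\<lambda>t. max 0 (2*t - 1))) p"
    by (rule phom_reparam_id[OF assms]) (auto intro!: continuous_intros)
  ultimately show ?thesis by simp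
qed

lemma phom_runit: assumes "pathin T p" shows "phom T (p +++ (\<lambda>t. p 1)) p"
proof -
  have "p +++ (\<lambda>t. p 1) = p \<circ> (\<lambda>t. min 1 (2*t))"
    unfolding fun_eq_iff proof fix x show "(p +++ (\<lambda>t. p 1)) x = (p \<circ> (\<lambda>t. min 1 (2*t))) x"
      proof (cases rule: linorder_cases[of x "1/2"])
        case equal then have "2*x - 1 = 0" "2*x = 1" by simp_all
        then show ?thesis by (simp add: joinpaths_def min_def)
      qed (simp_all add: joinpaths_def min_def) qed
  moreover have "phom T (p \<circ> (\<lambda>t. min 1 (2*t))) p"
    by (rule phom_reparam_id[OF assms]) (auto intro!: continuous_intros)
  ultimately show ?thesis by simp
qed

lemma phom_rinv: assumes "pathin T p" shows "phom T (p +++ reversepath p) (\<lambda>t. p 0)"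
proof -
  have "p +++ reversepath p = p \<circ> (\<lambda>t. 1 - \<bar>1 - 2*t\<bar>)"
    by (auto simp: joinpaths_def reversepath_def fun_eq_iff abs_if)
  moreover have "(\<lambda>t. p 0) = p \<circ> (\<lambda>t. 0)" by auto
  moreover have "phom T (p \<circ> (\<lambda>t. 1 - \<bar>1 - 2*t\<bar>)) (p \<circ> (\<lambda>t. 0))"
    by (rule phom_reparam[OF assms]) (auto intro!: continuous_intros)
  ultimately show ?thesis by simp
qed

lemma phom_linv: assumes "pathin T p" shows "phom T (reversepath p +++ p) (\<lambda>t. p 1)"
proof -
  have "reversepath p +++ p = p \<circ> (\<lambda>t. \<bar>1 - 2*t\<bar>)"
    by (auto simp: joinpaths_def reversepath_def fun_eq_iff abs_if)
  moreover have "(\<lambda>t. p 1) = p \<circ> (\<lambda>t. 1)" by auto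
  moreover have "phom T (p \<circ> (\<lambda>t. \<bar>1 - 2*t\<bar>)) (p \<circ> (\<lambda>t. 1))"
    by (rule phom_reparam[OF assms]) (auto intro!: continuous_intros)
  ultimately show ?thesis by simp
qed

lemma assoc_eq: "(a +++ b) +++ c = (a +++ (b +++ c)) \<circ> (\<lambda>t. min (2*t) (min (t + 1/4) ((t+1)/2)))"
proof (rule ext)
  fix t :: real
  consider "t \<le> 1/4" | "1/4 < t" "t \<le> 1/2" | "1/2 < t" by linarith
  then show "((a +++ b) +++ c) t = ((a +++ (b +++ c)) \<circ> (\<lambda>t. min (2*t) (min (t + 1/4) ((t+1)/2)))) t"
  proof cases
    case 1
    then have "min (2*t) (min (t + 1/4) ((t+1)/2)) = 2*t" by auto
    then show ?thesis using 1 by (simp add: joinpaths_def)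
  next
    case 2
    then have m: "min (2*t) (min (t + 1/4) ((t+1)/2)) = t + 1/4" by auto
    have "2 * (2 * (t + 1/4) - 1) = 2 * (2 * t) - 1" by simp
    then show ?thesis using 2 by (simp add: joinpaths_def m)
  next
    case 3
    then have m: "min (2*t) (min (t + 1/4) ((t+1)/2)) = (t+1)/2" by auto
    have "2 * ((t+1)/2) - 1 = t" by (simp add: field_simps)
    then show ?thesis using 3 by (simp add: joinpaths_def m)
  qed
qed

lemma phom_assoc:
  assumes "pathin T a" "pathin T b" "pathin T c" "a 1 = b 0" "b 1 = c 0"
  shows "phom T ((a +++ b) +++ c) (a +++ (b +++ c))"
proof -
  have w: "pathin T (a +++ (b +++ c))"
    using assms by (intro pathin_join) (auto simp: joinpaths_def)
  have r: "(\<lambda>t::real. min (2*t) (min (t + 1/4) ((t+1)/2))) ` {0..1} \<subseteq> {0..1}"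
    by (auto simp: min_def)
  show ?thesis unfolding assoc_eq
    by (rule phom_reparam_id[OF w _ r]) (auto intro!: continuous_intros)
qed


section \<open>Rips complexes\<close>

lemma simplex_sub_carrier: "rips_simplex E \<sigma> \<Longrightarrow> geom_simplex \<sigma> \<subseteq> rips_carrier E"
  unfolding rips_carrier_def by blast

lemma topspace_rips: "topspace (rips E) = rips_carrier E"
proof -
  have "rips_open E (rips_carrier E)"
    unfolding rips_open_def
  proof (intro conjI allI impI)
    fix \<sigma> assume "rips_simplex E \<sigma>"
    then have "rips_carrier E \<inter> geom_simplex \<sigma> = geom_simplex \<sigma>" using simplex_sub_carrier by blast
    then show "openin (top_of_set (geom_simplex \<sigma>)) (rips_carrier E \<inter> geom_simplex \<sigma>)" by simp
  qed simp
  moreover have "\<And>U. rips_open E U \<Longrightarrow> U \<subseteq> rips_carrier E" by (simp add: rips_open_def)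
  ultimately show ?thesis unfolding topspace_def openin_rips by blast
qed

lemma simplex_incl:
  assumes "rips_simplex E \<sigma>"
  shows "continuous_map (top_of_set (geom_simplex \<sigma>)) (rips E) (\<lambda>x. x)"
  unfolding continuous_map_def
proof (intro conjI allI impI)
  show "(\<lambda>x. x) \<in> topspace (top_of_set (geom_simplex \<sigma>)) \<rightarrow> topspace (rips E)"
    using simplex_sub_carrier[OF assms] by (auto simp: topspace_rips)
  fix U assume "openin (rips E) U"
  then have "openin (top_of_set (geom_simplex \<sigma>)) (U \<inter> geom_simplex \<sigma>)"
    using assms by (simp add: openin_rips rips_open_def)
  moreover have "{x \<in> topspace (top_of_set (geom_simplex \<sigma>)). x \<in> U} = U \<inter> geom_simplex \<sigma>" by auto
  ultimately show "openin (top_of_set (geom_simplex \<sigma>)) {x \<in> topspace (top_of_set (geom_simplex \<sigma>)). x \<in> U}" by simp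
qed

lemma rips_mono:
  assumes "F \<subseteq> E"
  shows "continuous_map (rips F) (rips E) (\<lambda>x. x)"
  unfolding continuous_map_def
proof (intro conjI allI impI)
  have sm: "rips_simplex F \<sigma> \<Longrightarrow> rips_simplex E \<sigma>" for \<sigma> using assms by (auto simp: rips_simplex_def)
  then have cs: "rips_carrier F \<subseteq> rips_carrier E" unfolding rips_carrier_def by blast
  then show "(\<lambda>x. x) \<in> topspace (rips F) \<rightarrow> topspace (rips E)" by (auto simp: topspace_rips)
  fix U assume "openin (rips E) U"
  then have U: "rips_open E U" by (simp add: openin_rips)
  have "rips_open F (U \<inter> rips_carrier F)"
    unfolding rips_open_def
  proof (intro conjI allI impI)
    fix \<sigma> assume s: "rips_simplex F \<sigma>"
    then have "U \<inter> rips_carrier F \<inter> geom_simplex \<sigma> = U \<inter> geom_simplex \<sigma>" using simplex_sub_carrier by blast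
    then show "openin (top_of_set (geom_simplex \<sigma>)) (U \<inter> rips_carrier F \<inter> geom_simplex \<sigma>)"
      using U sm[OF s] by (simp add: rips_open_def)
  qed simp
  moreover have "{x \<in> topspace (rips F). x \<in> U} = U \<inter> rips_carrier F" by (auto simp: topspace_rips)
  ultimately show "openin (rips F) {x \<in> topspace (rips F). x \<in> U}" by (simp add: openin_rips)
qed

lemma phom_rips_mono: "F \<subseteq> E \<Longrightarrow> phom (rips F) p q \<Longrightarrow> phom (rips E) p q"
  using phom_map[OF _ rips_mono, of F p q E] by (simp add: o_def)

lemma vtx_inj: "vtx x = vtx y \<Longrightarrow> x = y"
  by (metis vtx_def zero_neq_one)

lemma edge_same: "edge_path x x = (\<lambda>t. vtx x)"
  by (simp add: edge_path_def fun_eq_iff algebra_simps)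

lemma edge_rev: "reversepath (edge_path x y) = edge_path y x"
  by (simp add: edge_path_def reversepath_def fun_eq_iff algebra_simps)

lemma edge_ends [simp]: "edge_path x y 0 = vtx x" "edge_path x y 1 = vtx y"
  by (simp_all add: edge_path_def fun_eq_iff)

lemma edge_path_in:
  assumes xy: "(x, y) \<in> E" and s: "sym E" and i: "Id \<subseteq> E"
  shows "pathin (rips E) (edge_path x y)"
proof -
  have sig: "rips_simplex E {x, y}"
    using xy s i by (auto simp: rips_simplex_def sym_def)
  have c: "continuous_on {0..1} (edge_path x y)"
    unfolding edge_path_def
    by (intro continuous_on_coordinatewise_then_product continuous_intros)
  have m: "edge_path x y t \<in> geom_simplex {x, y}" if "t \<in> {0..1}" for t
    using that by (cases "x = y") (auto simp: geom_simplex_def edge_path_def vtx_def)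
  have "pathin (top_of_set (geom_simplex {x, y})) (edge_path x y)"
    using c m by (auto simp: pathin_canon_iff path_def)
  then show ?thesis using pathin_compose[OF _ simplex_incl[OF sig]] by (simp add: o_def)
qed

lemma rips_hom_eq: "rips_homotopic E = phom (rips E)"
  by (simp add: fun_eq_iff rips_homotopic_def phom_def)


section \<open>Generalized paths\<close>

lemma ent_sym: "entourage E \<Longrightarrow> sym E" by (simp add: entourage_def)
lemma ent_Id: "entourage E \<Longrightarrow> Id \<subseteq> E" by (simp add: entourage_def)
lemma ent_ev: "entourage E \<Longrightarrow> eventually (\<lambda>p. p \<in> E) uniformity" by (simp add: entourage_def)
lemma ent_UNIV: "entourage (UNIV :: ('a::uniform_space \<times> 'a) set)"
  by (simp add: entourage_def sym_def)

lemma vtx_top: assumes "entourage E" shows "vtx x \<in> topspace (rips E)"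
proof -
  have "pathin (rips E) (edge_path x x)"
    by (rule edge_path_in) (use ent_Id[OF assms] ent_sym[OF assms] in auto)
  from path_start_in_topspace[OF this] show ?thesis by simp
qed

lemma gp_rep: "is_gpath c x y \<Longrightarrow> entourage E \<Longrightarrow>
   \<exists>p. pathin (rips E) p \<and> p 0 = vtx x \<and> p 1 = vtx y \<and> c E = {q. phom (rips E) p q}"
proof -
  assume h: "is_gpath c x y" "entourage E"
  have "\<forall>E. entourage E \<longrightarrow>
        (\<exists>p. pathin (rips E) p \<and> p 0 = vtx x \<and> p 1 = vtx y \<and> c E = {q. phom (rips E) p q})"
    using conjunct1[OF h(1)[unfolded is_gpath_def rips_hom_eq]] .
  then show ?thesis using \<open>entourage E\<close> by blast
qed

lemma gp_mem: assumes "is_gpath c x y" "entourage E" "q \<in> c E"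
  shows "pathin (rips E) q \<and> q 0 = vtx x \<and> q 1 = vtx y"
proof -
  obtain p where p: "pathin (rips E) p" "p 0 = vtx x" "p 1 = vtx y" "c E = {q. phom (rips E) p q}"
    using gp_rep[OF assms(1,2)] by blast
  then have "phom (rips E) p q" using assms(3) by simp
  from phom_imp[OF this] p show ?thesis by simp
qed

lemma gp_two: assumes "is_gpath c x y" "entourage E" "q \<in> c E" "r \<in> c E"
  shows "phom (rips E) q r"
proof -
  obtain p where p: "c E = {q. phom (rips E) p q}"
    using gp_rep[OF assms(1,2)] by blast
  then have "phom (rips E) p q" "phom (rips E) p r" using assms(3,4) by simp_all
  then show ?thesis using phom_sym phom_trans by metis
qed

lemma gp_ne: assumes "is_gpath c x y" "entourage E" shows "\<exists>q. q \<in> c E"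
proof -
  obtain p where p: "pathin (rips E) p" "c E = {q. phom (rips E) p q}"
    using gp_rep[OF assms(1,2)] by blast
  then have "p \<in> c E" by (simp add: phom_refl)
  then show ?thesis by blast
qed

definition rep :: "'a::uniform_space gpath \<Rightarrow> ('a \<times> 'a) set \<Rightarrow> real \<Rightarrow> 'a \<Rightarrow> real" where
  "rep c E = (SOME p. p \<in> c E)"

lemma rep_mem: assumes "is_gpath c x y" "entourage E" shows "rep c E \<in> c E"
proof -
  obtain q where "q \<in> c E" using gp_ne[OF assms] by blast
  then show ?thesis unfolding rep_def by (rule someI[where P="\<lambda>p. p \<in> c E"])
qed

lemma rep_props: assumes "is_gpath c x y" "entourage E"
  shows "pathin (rips E) (rep c E) \<and> rep c E 0 = vtx x \<and> rep c E 1 = vtx y"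
  using gp_mem[OF assms rep_mem[OF assms]] .

lemma rep_coh: assumes "is_gpath c x y" "entourage E" "entourage F" "F \<subseteq> E"
  shows "phom (rips E) (rep c F) (rep c E)"
proof -
  have "\<forall>E F. entourage E \<and> entourage F \<and> F \<subseteq> E \<longrightarrow>
        (\<forall>p \<in> c F. \<forall>q \<in> c E. phom (rips E) p q)"
    using assms(1) unfolding is_gpath_def rips_hom_eq by (elim conjE)
  then have "\<forall>p \<in> c F. \<forall>q \<in> c E. phom (rips E) p q" using assms(2-4) by simp
  then show ?thesis using rep_mem[OF assms(1) assms(2)] rep_mem[OF assms(1) assms(3)] by simp
qed

lemma gp_unique: assumes "is_gpath c x y" "is_gpath c x' y'" shows "x = x' \<and> y = y'"
proof -
  have a: "rep c UNIV 0 = vtx x \<and> rep c UNIV 1 = vtx y" using rep_props[OF assms(1) ent_UNIV] by (elim conjE) (rule conjI)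
  have b: "rep c UNIV 0 = vtx x' \<and> rep c UNIV 1 = vtx y'" using rep_props[OF assms(2) ent_UNIV] by (elim conjE) (rule conjI)
  from a b have "vtx x = vtx x'" "vtx y = vtx y'" by simp_all
  from vtx_inj[OF this(1)] vtx_inj[OF this(2)] show ?thesis by (rule conjI)
qed

lemma gp_end_eq: assumes h: "is_gpath c x y" shows "gp_end c = y"
  unfolding gp_end_def
proof (rule the_equality)
  show "\<exists>x. is_gpath c x y" using h by blast
  fix y' assume "\<exists>x. is_gpath c x y'" then show "y' = y" using gp_unique h by blast
qed

definition mkgp :: "(('a::uniform_space \<times> 'a) set \<Rightarrow> real \<Rightarrow> 'a \<Rightarrow> real) \<Rightarrow> 'a gpath" where
  "mkgp P = (\<lambda>E. if entourage E then {q. phom (rips E) (P E) q} else {})"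

lemma mkgp:
  assumes P: "\<And>E. entourage E \<Longrightarrow> pathin (rips E) (P E) \<and> P E 0 = vtx x \<and> P E 1 = vtx y"
    and coh: "\<And>E F. entourage E \<Longrightarrow> entourage F \<Longrightarrow> F \<subseteq> E \<Longrightarrow> phom (rips E) (P F) (P E)"
  shows "is_gpath (mkgp P) x y"
  unfolding is_gpath_def rips_hom_eq
proof (intro conjI allI impI)
  fix E :: "('a \<times> 'a) set" assume "entourage E"
  then show "\<exists>p. pathin (rips E) p \<and> p 0 = vtx x \<and> p 1 = vtx y \<and> mkgp P E = {q. phom (rips E) p q}"
    using P by (auto simp: mkgp_def)
next
  fix E :: "('a \<times> 'a) set" assume "\<not> entourage E" then show "mkgp P E = {}" by (simp add: mkgp_def)
next
  fix E F :: "('a \<times> 'a) set" assume h: "entourage E \<and> entourage F \<and> F \<subseteq> E"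
  show "\<forall>p\<in>mkgp P F. \<forall>q\<in>mkgp P E. phom (rips E) p q"
  proof (intro ballI)
    fix p q assume "p \<in> mkgp P F" "q \<in> mkgp P E"
    then have "phom (rips F) (P F) p" "phom (rips E) (P E) q" using h by (auto simp: mkgp_def)
    then have 1: "phom (rips E) (P F) p" using h phom_rips_mono[of F E] by simp
    have 2: "phom (rips E) (P F) (P E)" using coh h by simp
    show "phom (rips E) p q"
      using phom_trans[OF phom_trans[OF phom_sym[OF 1] 2] \<open>phom (rips E) (P E) q\<close>] .
  qed
qed

lemma mkgp_mem: "entourage E \<Longrightarrow> pathin (rips E) (P E) \<Longrightarrow> P E \<in> mkgp P E"
  by (simp add: mkgp_def phom_refl)

definition gconst :: "'a::uniform_space \<Rightarrow> 'a gpath" where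
  "gconst x = mkgp (\<lambda>E t. vtx x)"

lemma gconst: "is_gpath (gconst x) x x"
  unfolding gconst_def
  by (rule mkgp) (auto simp: vtx_top phom_refl)

definition gcat :: "'a::uniform_space gpath \<Rightarrow> 'a gpath \<Rightarrow> 'a gpath" where
  "gcat c d = mkgp (\<lambda>E. rep c E +++ rep d E)"

lemma gcat: assumes c: "is_gpath c x y" and d: "is_gpath d y z" shows "is_gpath (gcat c d) x z"
  unfolding gcat_def
proof (rule mkgp)
  fix E :: "('a \<times> 'a) set" assume E: "entourage E"
  show "pathin (rips E) (rep c E +++ rep d E) \<and> (rep c E +++ rep d E) 0 = vtx x \<and> (rep c E +++ rep d E) 1 = vtx z"
  proof -
    have a: "pathin (rips E) (rep c E)" "rep c E 0 = vtx x" "rep c E 1 = vtx y" using rep_props[OF c E] by simp_all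
    have b: "pathin (rips E) (rep d E)" "rep d E 0 = vtx y" "rep d E 1 = vtx z" using rep_props[OF d E] by simp_all
    have "pathin (rips E) (rep c E +++ rep d E)" using a b by (intro pathin_join) simp_all
    then show ?thesis using a b by (simp add: joinpaths_def)
  qed
next
  fix E F :: "('a \<times> 'a) set" assume h: "entourage E" "entourage F" "F \<subseteq> E"
  show "phom (rips E) (rep c F +++ rep d F) (rep c E +++ rep d E)"
    using rep_coh[OF c h] rep_coh[OF d h] rep_props[OF c h(2)] rep_props[OF d h(2)]
    by (intro phom_join) auto
qed

definition ginv :: "'a::uniform_space gpath \<Rightarrow> 'a gpath" where
  "ginv c = mkgp (\<lambda>E. reversepath (rep c E))"

lemma ginv: assumes c: "is_gpath c x y" shows "is_gpath (ginv c) y x"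
  unfolding ginv_def
proof (rule mkgp)
  fix E :: "('a \<times> 'a) set" assume E: "entourage E"
  show "pathin (rips E) (reversepath (rep c E)) \<and> reversepath (rep c E) 0 = vtx y \<and> reversepath (rep c E) 1 = vtx x"
  proof -
    have a: "pathin (rips E) (rep c E)" "rep c E 0 = vtx x" "rep c E 1 = vtx y" using rep_props[OF c E] by simp_all
    have "pathin (rips E) (reversepath (rep c E))" using a by (intro pathin_rev)
    then show ?thesis using a by (simp add: reversepath_def)
  qed
next
  fix E F :: "('a \<times> 'a) set" assume h: "entourage E" "entourage F" "F \<subseteq> E"
  show "phom (rips E) (reversepath (rep c F)) (reversepath (rep c E))"
    using rep_coh[OF c h] by (rule phom_rev)
qed

lemma rep_mkgp: assumes "is_gpath (mkgp P) x y" "entourage E" shows "phom (rips E) (P E) (rep (mkgp P) E)"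
  using rep_mem[OF assms] assms(2) by (simp add: mkgp_def)


declare phom_trans[trans]

lemma gp_exists:
  assumes CC: "chain_connected TYPE('a::uniform_space)" and UJ: "uniformly_joinable TYPE('a)"
  shows "\<exists>c. is_gpath c (x0::'a) y"
proof -
  have "\<forall>E::('a \<times> 'a) set. entourage E \<longrightarrow>
        (\<exists>F. entourage F \<and> (\<forall>x y. (x, y) \<in> F \<longrightarrow> (\<exists>c. is_short E c x y)))"
    using UJ unfolding uniformly_joinable_def .
  then obtain F :: "('a \<times> 'a) set" where F: "entourage F" "\<forall>x y. (x, y) \<in> F \<longrightarrow> (\<exists>c. is_short UNIV c x y)"
    using ent_UNIV by blast
  have "\<forall>E::('a \<times> 'a) set. entourage E \<longrightarrow> (\<forall>x y. (x, y) \<in> E\<^sup>*)"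
    using CC unfolding chain_connected_def .
  then have "(x0, y) \<in> F\<^sup>*" using F(1) by blast
  then show ?thesis
  proof (induction rule: rtrancl_induct)
    case base show ?case using gconst by blast
  next
    case (step z w)
    obtain c where c: "is_gpath c x0 z" using step.IH by blast
    obtain s where "is_short UNIV s z w" using F(2) step(2) by blast
    then have "is_gpath s z w" by (simp add: is_short_def)
    from gcat[OF c this] show ?case by blast
  qed
qed

lemma short_rep:
  assumes "is_short F s x y" "entourage F"
  shows "phom (rips F) (rep s F) (edge_path x y)"
proof -
  have g: "is_gpath s x y" using assms by (simp add: is_short_def)
  obtain r where r: "r \<in> s F" "phom (rips F) r (edge_path x y)"
    using assms(1) by (auto simp: is_short_def rips_hom_eq)
  have "phom (rips F) (rep s F) r" using gp_two[OF g assms(2) rep_mem[OF g assms(2)] r(1)] .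
  also have "phom (rips F) r (edge_path x y)" by (rule r(2))
  finally show ?thesis .
qed

lemma pi_image_sub:
  fixes x0 :: "'a::uniform_space"
  assumes E: "entourage E"
  shows "pi_image x0 E \<subseteq> E"
proof
  fix z assume "z \<in> pi_image x0 E"
  then obtain c d where z: "z = (gp_end c, gp_end d)" and c: "c \<in> GP_at x0" and d: "d \<in> GP_at x0"
    and cd: "(c, d) \<in> GP_star E" unfolding pi_image_def by blast
  obtain a where ca: "is_gpath c x0 a" using c unfolding GP_at_def by blast
  obtain b where db: "is_gpath d x0 b" using d unfolding GP_at_def by blast
  obtain p q where p: "p \<in> c E" and q: "q \<in> d E" and h: "E_homotopic E p q"
    using cd unfolding GP_star_def by blast
  obtain xc xd yc yd where "p 1 = vtx yc" "q 1 = vtx yd" "(yc, yd) \<in> E"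
    using h unfolding E_homotopic_def by blast
  moreover have "p 1 = vtx a" "q 1 = vtx b" using gp_mem[OF ca E p] gp_mem[OF db E q] by simp_all
  ultimately have "vtx yc = vtx a" "vtx yd = vtx b" "(yc, yd) \<in> E" by simp_all
  then have "(a, b) \<in> E" using vtx_inj[of yc a] vtx_inj[of yd b] by simp
  then show "z \<in> E" using z gp_end_eq[OF ca] gp_end_eq[OF db] by simp
qed


lemma key_b:
  assumes p: "pathin T p" and rs: "phom T rs (edge_path x y)" and e: "pathin T (edge_path x y)"
    and p0: "p 0 = vtx x0" and p1: "p 1 = vtx x"
  shows "phom T p (edge_path x0 x0 +++ ((p +++ rs) +++ edge_path y x))"
proof -
  let ?e = "edge_path x y"
  have rsp: "pathin T rs" "rs 0 = vtx x" "rs 1 = vtx y" using phom_imp[OF rs] by auto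
  have er: "pathin T (reversepath ?e)" using e by (rule pathin_rev)
  have j1: "phom T (p +++ rs) (p +++ ?e)"
    by (rule phom_join[OF phom_refl[OF p] rs]) (simp add: p1 rsp)
  have "phom T ((p +++ rs) +++ reversepath ?e) ((p +++ ?e) +++ reversepath ?e)"
    by (rule phom_join[OF j1 phom_refl[OF er]]) (simp add: rsp joinpaths_def reversepath_def)
  then have "phom T ((p +++ rs) +++ edge_path y x) ((p +++ ?e) +++ reversepath ?e)"
    by (simp only: edge_rev)
  also have "phom T ((p +++ ?e) +++ reversepath ?e) (p +++ (?e +++ reversepath ?e))"
    by (rule phom_assoc[OF p e er]) (simp_all add: p1 reversepath_def)
  also have "phom T (p +++ (?e +++ reversepath ?e)) (p +++ (\<lambda>t. ?e 0))"
    by (rule phom_join[OF phom_refl[OF p] phom_rinv[OF e]]) (simp add: p1 joinpaths_def)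
  also have "phom T (p +++ (\<lambda>t. ?e 0)) p"
    using phom_runit[OF p] by (simp add: p1)
  finally have 1: "phom T ((p +++ rs) +++ edge_path y x) p" .
  have ep: "pathin T (edge_path x0 x0)"
    using path_start_in_topspace[OF p] by (simp add: edge_same p0)
  have "phom T (edge_path x0 x0 +++ ((p +++ rs) +++ edge_path y x)) (edge_path x0 x0 +++ p)"
    by (rule phom_join[OF phom_refl[OF ep] 1]) (simp add: joinpaths_def rsp p1 p0)
  also have "phom T (edge_path x0 x0 +++ p) p"
    using phom_lunit[OF p] by (simp add: edge_same p0)
  finally show ?thesis by (rule phom_sym)
qed


lemma key_c:
  assumes pq: "phom T p (edge_path x0 x0 +++ (q +++ edge_path y x))"
    and q: "pathin T q" and q0: "q 0 = vtx x0" and q1: "q 1 = vtx y" and e: "pathin T (edge_path x y)"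
  shows "phom T (reversepath p +++ q) (edge_path x y)"
proof -
  let ?e = "edge_path x y"
  have er: "pathin T (edge_path y x)" using pathin_rev[OF e] by (simp add: edge_rev)
  have Z: "pathin T (q +++ edge_path y x)" by (rule pathin_join[OF q er]) (simp add: q1)
  have "phom T p (edge_path x0 x0 +++ (q +++ edge_path y x))" by (rule pq)
  also have "phom T (edge_path x0 x0 +++ (q +++ edge_path y x)) (q +++ edge_path y x)"
    using phom_lunit[OF Z] by (simp add: edge_same joinpaths_def q0)
  finally have pz: "phom T p (q +++ edge_path y x)" .
  have p0: "p 0 = vtx x0" using phom_imp[OF pq] by (simp add: joinpaths_def)
  have rz: "reversepath (q +++ edge_path y x) = ?e +++ reversepath q"
    using reversepath_joinpaths[of q "edge_path y x"] by (simp add: pathfinish_def pathstart_def q1 edge_rev)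
  have rq: "pathin T (reversepath q)" using q by (rule pathin_rev)
  have "phom T (reversepath p) (?e +++ reversepath q)" using phom_rev[OF pz] by (simp only: rz)
  then have "phom T (reversepath p +++ q) ((?e +++ reversepath q) +++ q)"
    by (rule phom_join[OF _ phom_refl[OF q]]) (simp add: reversepath_def p0 q0)
  also have "phom T ((?e +++ reversepath q) +++ q) (?e +++ (reversepath q +++ q))"
    by (rule phom_assoc[OF e rq q]) (simp_all add: reversepath_def q1)
  also have "phom T (?e +++ (reversepath q +++ q)) (?e +++ (\<lambda>t. q 1))"
    by (rule phom_join[OF phom_refl[OF e] phom_linv[OF q]]) (simp add: joinpaths_def reversepath_def q1)
  also have "phom T (?e +++ (\<lambda>t. q 1)) ?e"
    using phom_runit[OF e] by (simp add: q1)
  finally show ?thesis .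
qed

lemma a_to_b:
  fixes x0 :: "'a::uniform_space"
  assumes CC: "chain_connected TYPE('a)" and UJ: "uniformly_joinable TYPE('a)"
  shows "pi_generates x0"
  unfolding pi_generates_def
proof (intro conjI allI impI)
  show "gp_end ` GP_at x0 = UNIV"
  proof (rule set_eqI, rule iffI)
    fix y :: 'a assume "y \<in> UNIV"
    obtain c where c: "is_gpath c x0 y" using gp_exists[OF CC UJ] by blast
    then have "c \<in> GP_at x0" by (auto simp: GP_at_def)
    moreover have "y = gp_end c" using gp_end_eq[OF c] by simp
    ultimately show "y \<in> gp_end ` GP_at x0" by blast
  qed simp
next
  fix E :: "('a \<times> 'a) set" assume E: "entourage E"
  show "\<exists>F. entourage F \<and> pi_image x0 F \<subseteq> E"
    using E pi_image_sub[OF E] by blast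
next
  fix F :: "('a \<times> 'a) set" assume F: "entourage F"
  have "\<forall>E::('a \<times> 'a) set. entourage E \<longrightarrow>
        (\<exists>G. entourage G \<and> (\<forall>x y. (x, y) \<in> G \<longrightarrow> (\<exists>c. is_short E c x y)))"
    using UJ unfolding uniformly_joinable_def .
  then obtain G :: "('a \<times> 'a) set" where G: "entourage G" "\<forall>x y. (x, y) \<in> G \<longrightarrow> (\<exists>c. is_short F c x y)"
    using F by blast
  have sub: "G \<subseteq> pi_image x0 F"
  proof (rule subsetI)
    fix z assume zG: "z \<in> G"
    obtain x y where z: "z = (x, y)" by (cases z)
    obtain c where c: "is_gpath c x0 x" using gp_exists[OF CC UJ] by blast
    obtain s where s: "is_short F s x y" using G(2) zG z by blast
    have sg: "is_gpath s x y" and xyF: "(x, y) \<in> F" using s by (simp_all add: is_short_def)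
    define d where "d = gcat c s"
    have d: "is_gpath d x0 y" unfolding d_def by (rule gcat[OF c sg])
    let ?p = "rep c F" let ?rs = "rep s F"
    have pp: "pathin (rips F) ?p" "?p 0 = vtx x0" "?p 1 = vtx x" using rep_props[OF c F] by simp_all
    have rsp: "pathin (rips F) ?rs" "?rs 0 = vtx x" "?rs 1 = vtx y" using rep_props[OF sg F] by simp_all
    have qp: "pathin (rips F) (?p +++ ?rs)" by (rule pathin_join[OF pp(1) rsp(1)]) (simp add: pp rsp)
    have qd: "?p +++ ?rs \<in> d F" unfolding d_def gcat_def
      using mkgp_mem[of F "\<lambda>E. rep c E +++ rep s E", OF F] qp by simp
    have e: "pathin (rips F) (edge_path x y)"
      by (rule edge_path_in[OF xyF ent_sym[OF F] ent_Id[OF F]])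
    have h: "phom (rips F) ?p (edge_path x0 x0 +++ ((?p +++ ?rs) +++ edge_path y x))"
      by (rule key_b[OF pp(1) short_rep[OF s F] e pp(2) pp(3)])
    have "(x0, x0) \<in> F" using ent_Id[OF F] by auto
    then have "E_homotopic F ?p (?p +++ ?rs)"
      unfolding E_homotopic_def rips_hom_eq
      using h xyF pp rsp by (intro exI[of _ x0] exI[of _ x] exI[of _ y]) (simp add: joinpaths_def)
    then have "(c, d) \<in> GP_star F"
      unfolding GP_star_def GP_def using c d rep_mem[OF c F] qd by blast
    moreover have "c \<in> GP_at x0" "d \<in> GP_at x0" using c d by (auto simp: GP_at_def)
    ultimately show "z \<in> pi_image x0 F"
      unfolding pi_image_def z using gp_end_eq[OF c] gp_end_eq[OF d] by blast
  qed
  show "eventually (\<lambda>p. p \<in> pi_image x0 F) uniformity"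
    using ent_ev[OF G(1)] sub by (auto elim: eventually_mono)
qed


lemma c_to_a:
  fixes x0 :: "'a::uniform_space"
  assumes PG: "pi_generates x0"
  shows "uniformly_joinable TYPE('a)"
  unfolding uniformly_joinable_def
proof (intro allI impI)
  fix E :: "('a \<times> 'a) set" assume E: "entourage E"
  let ?P = "pi_image x0 E"
  have ev: "eventually (\<lambda>p. p \<in> ?P) uniformity" using PG E unfolding pi_generates_def by blast
  have ev2: "eventually (\<lambda>(x, y). (y, x) \<in> ?P) uniformity"
    using uniformity_sym[OF ev] by simp
  define G where "G = {z. z \<in> ?P \<and> (snd z, fst z) \<in> ?P}"
  have evG: "eventually (\<lambda>z. z \<in> G) uniformity"
    using eventually_conj[OF ev ev2] unfolding G_def by (simp add: case_prod_beta)
  have G: "entourage G"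
    unfolding entourage_def
  proof (intro conjI)
    show "sym G" unfolding G_def sym_def by auto
    show "Id \<subseteq> G" using uniformity_refl[OF evG] by auto
  qed (rule evG)
  show "\<exists>F. entourage F \<and> (\<forall>x y. (x, y) \<in> F \<longrightarrow> (\<exists>c. is_short E c x y))"
  proof (rule exI[of _ G], intro conjI allI impI)
    show "entourage G" by (rule G)
    fix x y assume "(x, y) \<in> G"
    then have "(x, y) \<in> ?P" unfolding G_def by simp
    then obtain c d where xy: "(x, y) = (gp_end c, gp_end d)" and c: "c \<in> GP_at x0" and d: "d \<in> GP_at x0"
      and cd: "(c, d) \<in> GP_star E" unfolding pi_image_def by blast
    obtain a where ca: "is_gpath c x0 a" using c unfolding GP_at_def by blast
    obtain b where db: "is_gpath d x0 b" using d unfolding GP_at_def by blast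
    have "a = x" "b = y" using xy gp_end_eq[OF ca] gp_end_eq[OF db] by simp_all
    then have ca: "is_gpath c x0 x" and db: "is_gpath d x0 y" using ca db by simp_all
    obtain p q where p: "p \<in> c E" and q: "q \<in> d E" and h: "E_homotopic E p q"
      using cd unfolding GP_star_def by blast
    obtain xc xd yc yd where hh: "p 0 = vtx xc" "q 0 = vtx xd" "p 1 = vtx yc" "q 1 = vtx yd"
        "(xc, xd) \<in> E" "(yc, yd) \<in> E"
        "phom (rips E) p (edge_path xc xd +++ (q +++ edge_path yd yc))"
      using h unfolding E_homotopic_def rips_hom_eq by blast
    have pp: "pathin (rips E) p" "p 0 = vtx x0" "p 1 = vtx x" using gp_mem[OF ca E p] by simp_all
    have qq: "pathin (rips E) q" "q 0 = vtx x0" "q 1 = vtx y" using gp_mem[OF db E q] by simp_all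
    have "vtx xc = vtx x0" "vtx xd = vtx x0" "vtx yc = vtx x" "vtx yd = vtx y"
      using hh pp qq by simp_all
    then have eqs: "xc = x0" "xd = x0" "yc = x" "yd = y"
      using vtx_inj[of xc x0] vtx_inj[of xd x0] vtx_inj[of yc x] vtx_inj[of yd y] by simp_all
    have xyE: "(x, y) \<in> E" using hh(6) eqs by simp
    have hp: "phom (rips E) p (edge_path x0 x0 +++ (q +++ edge_path y x))" using hh(7) eqs by simp
    have e: "pathin (rips E) (edge_path x y)"
      by (rule edge_path_in[OF xyE ent_sym[OF E] ent_Id[OF E]])
    have key: "phom (rips E) (reversepath p +++ q) (edge_path x y)"
      by (rule key_c[OF hp qq(1) qq(2) qq(3) e])
    have ic: "is_gpath (ginv c) x x0" by (rule ginv[OF ca])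
    define s where "s = gcat (ginv c) d"
    have sg: "is_gpath s x y" unfolding s_def by (rule gcat[OF ic db])
    let ?pi = "rep (ginv c) E" let ?pd = "rep d E"
    have pip: "pathin (rips E) ?pi" "?pi 0 = vtx x" "?pi 1 = vtx x0" using rep_props[OF ic E] by simp_all
    have pdp: "pathin (rips E) ?pd" "?pd 0 = vtx x0" "?pd 1 = vtx y" using rep_props[OF db E] by simp_all
    have rp: "pathin (rips E) (?pi +++ ?pd)" by (rule pathin_join[OF pip(1) pdp(1)]) (simp add: pip pdp)
    have rs: "?pi +++ ?pd \<in> s E" unfolding s_def gcat_def
      using mkgp_mem[of E "\<lambda>E. rep (ginv c) E +++ rep d E", OF E] rp by simp
    have "phom (rips E) (reversepath (rep c E)) ?pi"
      using rep_mkgp[OF ic[unfolded ginv_def] E] by (simp add: ginv_def)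
    then have 1: "phom (rips E) ?pi (reversepath (rep c E))" by (rule phom_sym)
    have 2: "phom (rips E) (reversepath (rep c E)) (reversepath p)"
      by (rule phom_rev[OF gp_two[OF ca E rep_mem[OF ca E] p]])
    have 3: "phom (rips E) ?pd q" by (rule gp_two[OF db E rep_mem[OF db E] q])
    have "phom (rips E) (?pi +++ ?pd) (reversepath p +++ q)"
      by (rule phom_join[OF phom_trans[OF 1 2] 3]) (simp add: pip pdp)
    also note key
    finally have "phom (rips E) (?pi +++ ?pd) (edge_path x y)" .
    then have "is_short E s x y"
      unfolding is_short_def rips_hom_eq using sg xyE rs by blast
    then show "\<exists>c. is_short E c x y" by blast
  qed
qed

theorem mainTheorem7:
  assumes "chain_connected TYPE('a::uniform_space)"
  shows "(uniformly_joinable TYPE('a) \<longleftrightarrow> (\<forall>x0::'a. pi_generates x0))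
     \<and> ((\<forall>x0::'a. pi_generates x0) \<longleftrightarrow> (\<exists>x0::'a. pi_generates x0))"
proof -
  have ab: "uniformly_joinable TYPE('a) \<Longrightarrow> (\<forall>x0::'a. pi_generates x0)"
    using a_to_b[OF assms] by blast
  have ca: "(\<exists>x0::'a. pi_generates x0) \<Longrightarrow> uniformly_joinable TYPE('a)"
    using c_to_a by blast
  show ?thesis using ab ca by blast
qed

end
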